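(* Let $G=(V\cup W,E)$ be a complete bipartite graph with parts $V,W$, $|V|=|W|=n$. Let $C>4$ be a constant, $K=C\log n$, $I=n/K$ (assume $K$ divides $n$), and partition $V=V(0)\cup\dots\cup V(K-1)$ and $W=W(0)\cup\dots\cup W(K-1)$ into sets of size $I$ each. Let $d\in W$ and let the protocol $\mathcal{P}_B$ be defined by the following distributions for routing towards $d$: for $v\in V(i)$, $\mathcal{D}(v,\mathcal{F}_v,d)=\mathrm{Uniform}(\{d\})$ if $d\notin\mathcal{F}_v$ and $\mathcal{D}(v,\mathcal{F}_v,d)=\mathrm{Uniform}(W(i)\setminus\mathcal{F}_v)$ otherwise; for $w\in W(i)$ with $w\neq d$, $\mathcal{D}(w,\mathcal{F}_w,d)=\mathrm{Uniform}(V((i+1)\bmod K)\setminus\mathcal{F}_w)$. Suppose all-to-one routing towards $d$ is performed and the set of failed edges $\mathcal{F}$ satisfies, for every $0\le i<K$: (1) for all $w\in W$, $|\{v\in V(i)~|~w\in\mathcal{F}_v\}|\le I/3$, and (2) for all $v\in V$, $|\{w\in W(i)~|~v\in\mathcal{F}_w\}|\le I/3$. Then, with probability at least $1-3n^{-(C-1)}$, every node $u\in V\cup W$ with $u\neq d$ has $\mathcal{L}(u)=O(\log n\cdot\log\log n)$; this holds even if $\mathcal{F}$ is constructed with knowledge of $\mathcal{P}_B$ and $d$.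
   Context: Local destination-based failover routing on a graph with node set $U$: given failed edges $\mathcal{F}$, $\mathcal{F}_v=\{w~|~(v,w)\in\mathcal{F}\}$. A protocol specifies, for each node $v$, destination $d$ and $\mathcal{F}_v$, a distribution $\mathcal{D}(v,\mathcal{F}_v,d)$ over the non-failed neighbors of $v$ (and $v$ itself). The failure set is fixed first (by an adversary knowing the protocol and $d$ but not the random choices); then each node $v$ independently draws its routing entry $\alpha(v)$ from $\mathcal{D}(v,\mathcal{F}_v,d)$ and forwards every packet with destination $d$ to $\alpha(v)$. All-to-one routing towards $d$: every node other than $d$ sends one flow towards $d$ along the forwarding entries. The load $\mathcal{L}(u)$ is the number of flows passing through $u$ (including its own); nodes on a forwarding cycle traversed by a flow have load $\infty$. $\mathrm{Uniform}(A)$ is the uniform distribution on the set $A$. *)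

theory Defs
  imports "HOL-Probability.Probability" "HOL-Library.Extended_Nat"
begin

definition failed_nbrs :: "('n \<times> 'n) set \<Rightarrow> 'n \<Rightarrow> 'n set" where
  "failed_nbrs F v = {w. (v, w) \<in> F}"

text \<open>The protocol P_B: distribution of the routing entry of node u towards d.
  V, W are the two parts, lvl u is the index i of the block V(i) resp. W(i)
  containing u, K the number of blocks.\<close>
definition PB_dist :: "'n set \<Rightarrow> 'n set \<Rightarrow> ('n \<Rightarrow> nat) \<Rightarrow> nat \<Rightarrow> ('n \<times> 'n) set \<Rightarrow> 'n \<Rightarrow> 'n \<Rightarrow> 'n pmf" where
  "PB_dist V W lvl K F d u =
     (if u \<in> V then
        (if d \<notin> failed_nbrs F u then pmf_of_set {d}
         else pmf_of_set ({w \<in> W. lvl w = lvl u} - failed_nbrs F u))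
      else pmf_of_set ({v \<in> V. lvl v = (lvl u + 1) mod K} - failed_nbrs F u))"

text \<open>Joint distribution of the routing entries: every node other than d draws
  independently; d keeps the packet (entry d).\<close>
definition PB_routing :: "'n set \<Rightarrow> 'n set \<Rightarrow> ('n \<Rightarrow> nat) \<Rightarrow> nat \<Rightarrow> ('n \<times> 'n) set \<Rightarrow> 'n \<Rightarrow> ('n \<Rightarrow> 'n) pmf" where
  "PB_routing V W lvl K F d = Pi_pmf ((V \<union> W) - {d}) d (PB_dist V W lvl K F d)"

definition flow_visits :: "('n \<Rightarrow> 'n) \<Rightarrow> 'n \<Rightarrow> 'n \<Rightarrow> 'n \<Rightarrow> bool" where
  "flow_visits \<alpha> d s x \<longleftrightarrow> (\<exists>k. (\<alpha> ^^ k) s = x \<and> (\<forall>j<k. (\<alpha> ^^ j) s \<noteq> d))"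

text \<open>Load of node x in all-to-one routing towards d over node set U:
  infinite if x (\<noteq> d) lies on a forwarding cycle (such x is traversed at least
  by its own flow), otherwise the number of flows passing through x.\<close>
definition load :: "'n set \<Rightarrow> 'n \<Rightarrow> ('n \<Rightarrow> 'n) \<Rightarrow> 'n \<Rightarrow> enat" where
  "load U d \<alpha> x =
     (if x \<noteq> d \<and> (\<exists>k>0. (\<alpha> ^^ k) x = x) then \<infinity>
      else enat (card {s \<in> U - {d}. flow_visits \<alpha> d s x}))"

end

theory Submission
  imports Defs
begin



locale PB =
  fixes V W :: "nat set" and lvl :: "nat \<Rightarrow> nat" and K I d :: nat and F :: "(nat \<times> nat) set"
  assumes finV: "finite V" and finW: "finite W" and disj: "V \<inter> W = {}"
    and Kpos: "K > 0" and Ipos: "I > 0"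
    and lvl_lt: "\<forall>u \<in> V \<union> W. lvl u < K"
    and cardL: "\<forall>i<K. card {v \<in> V. lvl v = i} = I \<and> card {w \<in> W. lvl w = i} = I"
    and dW: "d \<in> W"
    and symF: "sym F"
    and cF: "\<forall>i<K. (\<forall>w \<in> W. real (card {v \<in> V. lvl v = i \<and> w \<in> failed_nbrs F v}) \<le> real I / 3)
              \<and> (\<forall>v \<in> V. real (card {w \<in> W. lvl w = i \<and> v \<in> failed_nbrs F w}) \<le> real I / 3)"
begin

definition "Dom = (V \<union> W) - {d}"
definition "Dst u = PB_dist V W lvl K F d u"
definition "MP = PB_routing V W lvl K F d"
definition "DS = {v \<in> V. d \<in> failed_nbrs F v}"
definition "opts u = (if u \<in> V then {w \<in> W. lvl w = lvl u} - failed_nbrs F u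
                      else {v \<in> V. lvl v = (lvl u + 1) mod K} - failed_nbrs F u)"
definition cls :: "nat \<Rightarrow> int" where "cls x = (if x \<in> V then 2 * int (lvl x) else 2 * int (lvl x) + 1)"
abbreviation "MM \<equiv> 2 * int K"

lemma finDom: "finite Dom" using finV finW by (simp add: Dom_def)

lemma MP_eq: "MP = Pi_pmf Dom d Dst"
  by (simp add: MP_def PB_routing_def Dom_def Dst_def[abs_def])

lemma failed_sym: "x \<in> failed_nbrs F y \<longleftrightarrow> y \<in> failed_nbrs F x"
  using symF by (auto simp: failed_nbrs_def sym_def)

lemma card_diff_ge:
  assumes "finite A" "real (card (A \<inter> B)) \<le> real I / 3" "card A = I"
  shows "real (card (A - B)) \<ge> 2 * real I / 3"
proof -
  have "A \<subseteq> (A - B) \<union> (A \<inter> B)" by auto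
  hence "card A \<le> card (A - B) + card (A \<inter> B)"
    by (meson assms(1) card_Un_le card_mono finite_Un finite_Diff finite_Int order_trans)
  thus ?thesis using assms by linarith
qed

lemma opts_V:
  assumes "x \<in> V"
  shows "finite (opts x)" "opts x \<subseteq> {w \<in> W. lvl w = lvl x}" "real (card (opts x)) \<ge> 2 * real I / 3"
proof -
  have l: "lvl x < K" using lvl_lt assms by auto
  show "finite (opts x)" "opts x \<subseteq> {w \<in> W. lvl w = lvl x}"
    using assms finW by (auto simp: opts_def)
  have e: "{w \<in> W. lvl w = lvl x} \<inter> failed_nbrs F x = {w \<in> W. lvl w = lvl x \<and> x \<in> failed_nbrs F w}"
    using failed_sym by auto
  have o: "opts x = {w \<in> W. lvl w = lvl x} - failed_nbrs F x" using assms by (simp add: opts_def)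
  show "real (card (opts x)) \<ge> 2 * real I / 3"
    unfolding o
    apply (rule card_diff_ge)
    using finW apply simp
    using cF l assms e apply auto[1]
    using cardL l by auto
qed

lemma opts_W:
  assumes "x \<in> W"
  shows "finite (opts x)" "opts x \<subseteq> {v \<in> V. lvl v = (lvl x + 1) mod K}" "real (card (opts x)) \<ge> 2 * real I / 3"
proof -
  have xV: "x \<notin> V" using assms disj by auto
  have l: "(lvl x + 1) mod K < K" using Kpos by auto
  show "finite (opts x)" "opts x \<subseteq> {v \<in> V. lvl v = (lvl x + 1) mod K}"
    using xV finV by (auto simp: opts_def)
  have e: "{v \<in> V. lvl v = (lvl x + 1) mod K} \<inter> failed_nbrs F x = {v \<in> V. lvl v = (lvl x + 1) mod K \<and> x \<in> failed_nbrs F v}"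
    using failed_sym by auto
  have o: "opts x = {v \<in> V. lvl v = (lvl x + 1) mod K} - failed_nbrs F x" using xV by (simp add: opts_def)
  show "real (card (opts x)) \<ge> 2 * real I / 3"
    unfolding o
    apply (rule card_diff_ge)
    using finV apply simp
    using cF l assms e apply auto[1]
    using cardL l by auto
qed

lemma opts_ne: "x \<in> V \<union> W \<Longrightarrow> opts x \<noteq> {}"
proof -
  assume "x \<in> V \<union> W"
  hence "real (card (opts x)) \<ge> 2 * real I / 3" using opts_V opts_W by blast
  moreover have "real I > 0" using Ipos by simp
  ultimately have "card (opts x) > 0" by linarith
  thus ?thesis by auto
qed

lemma Dst_V_nDS: "x \<in> V \<Longrightarrow> x \<notin> DS \<Longrightarrow> Dst x = return_pmf d"
  by (simp add: Dst_def PB_dist_def DS_def pmf_of_set_singleton)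

lemma Dst_opts: "x \<in> DS \<or> x \<in> W \<Longrightarrow> Dst x = pmf_of_set (opts x)"
  using disj by (auto simp: Dst_def PB_dist_def DS_def opts_def)

lemma opts_fin: "x \<in> V \<union> W \<Longrightarrow> finite (opts x)" using opts_V opts_W by blast

lemma DS_V: "DS \<subseteq> V" by (auto simp: DS_def)

lemma dnV: "d \<notin> V" using dW disj by auto

lemma opts_DS_nd: "x \<in> DS \<Longrightarrow> d \<notin> opts x"
  by (auto simp: DS_def opts_def)

lemma supp:
  assumes "x \<in> Dom" "y \<in> set_pmf (Dst x)"
  shows "y \<in> V \<union> W" "x \<in> V \<Longrightarrow> x \<notin> DS \<Longrightarrow> y = d"
    "x \<in> DS \<Longrightarrow> y \<in> W \<and> y \<noteq> d \<and> lvl y = lvl x"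
    "x \<in> W \<Longrightarrow> y \<in> V \<and> lvl y = (lvl x + 1) mod K"
proof -
  have xU: "x \<in> V \<union> W" using assms by (auto simp: Dom_def)
  show "x \<in> V \<Longrightarrow> x \<notin> DS \<Longrightarrow> y = d" using assms Dst_V_nDS by auto
  show "x \<in> DS \<Longrightarrow> y \<in> W \<and> y \<noteq> d \<and> lvl y = lvl x"
  proof -
    assume a: "x \<in> DS"
    hence "y \<in> opts x" using assms Dst_opts[of x] opts_ne xU opts_fin by auto
    thus ?thesis using a opts_V[of x] opts_DS_nd[OF a] DS_V by auto
  qed
  show "x \<in> W \<Longrightarrow> y \<in> V \<and> lvl y = (lvl x + 1) mod K"
  proof -
    assume a: "x \<in> W"
    hence "y \<in> opts x" using assms Dst_opts[of x] opts_ne xU opts_fin by auto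
    thus ?thesis using a opts_W[of x] by auto
  qed
  show "y \<in> V \<union> W"
  proof (cases "x \<in> V")
    case True
    then show ?thesis using \<open>x \<in> V \<Longrightarrow> x \<notin> DS \<Longrightarrow> y = d\<close> \<open>x \<in> DS \<Longrightarrow> y \<in> W \<and> y \<noteq> d \<and> lvl y = lvl x\<close> dW by blast
  next
    case False
    then show ?thesis using xU \<open>x \<in> W \<Longrightarrow> y \<in> V \<and> lvl y = (lvl x + 1) mod K\<close> by blast
  qed
qed

lemma cls_range: "x \<in> V \<union> W \<Longrightarrow> 0 \<le> cls x \<and> cls x < MM"
proof -
  assume "x \<in> V \<union> W"
  hence "lvl x < K" using lvl_lt by auto
  thus ?thesis by (auto simp: cls_def)
qed

lemma cls_succ:
  assumes "x \<in> Dom" "y \<in> set_pmf (Dst x)" "y \<noteq> d"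
  shows "cls y = (cls x + 1) mod MM"
proof (cases "x \<in> V")
  case True
  hence "x \<in> DS" using supp(2)[OF assms(1,2)] assms(3) by blast
  hence y: "y \<in> W" "lvl y = lvl x" using supp(3)[OF assms(1,2)] by auto
  have "y \<notin> V" using y disj by auto
  moreover have "lvl x < K" using lvl_lt True by auto
  hence "2 * int (lvl x) + 1 < MM" by simp
  ultimately show ?thesis using True y by (simp add: cls_def)
next
  case False
  hence xW: "x \<in> W" using assms(1) by (auto simp: Dom_def)
  hence y: "y \<in> V" "lvl y = (lvl x + 1) mod K" using supp(4)[OF assms(1,2)] by auto
  have lx: "lvl x < K" using lvl_lt xW by auto
  have "2 * int ((lvl x + 1) mod K) = (2 * int (lvl x) + 1 + 1) mod MM"
  proof (cases "lvl x + 1 = K")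
    case True
    hence h: "2 * int (lvl x) + 1 + 1 = MM" by linarith
    have a: "(lvl x + 1) mod K = 0" using True by simp
    have b: "(2 * int (lvl x) + 1 + 1) mod MM = MM mod MM" by (simp only: h)
    show ?thesis unfolding a b by simp
  next
    case False
    hence "lvl x + 1 < K" using lx by simp
    then show ?thesis by simp
  qed
  thus ?thesis using False y by (simp add: cls_def)
qed

lemma supp_MP:
  assumes "\<alpha> \<in> set_pmf MP"
  shows "\<And>x. x \<in> Dom \<Longrightarrow> \<alpha> x \<in> set_pmf (Dst x)" "\<And>x. x \<notin> Dom \<Longrightarrow> \<alpha> x = d"
  using set_Pi_pmf_subset'[OF finDom, of d Dst] assms unfolding MP_eq PiE_dflt_def by auto

lemma rect:
  "measure_pmf.prob MP (Pi Dom B) = (\<Prod>x\<in>Dom. measure_pmf.prob (Dst x) (B x))"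
  unfolding MP_eq by (rule measure_Pi_pmf_Pi[OF finDom])

end



context PB begin

lemma q_bound:
  assumes "x \<in> DS \<or> x \<in> W" "finite S"
  shows "measure_pmf.prob (Dst x) S \<le> 3 * real (card S) / (2 * real I)"
proof -
  have xU: "x \<in> V \<union> W" using assms DS_V by auto
  have fin: "finite (opts x)" and ne: "opts x \<noteq> {}" using opts_fin[OF xU] opts_ne[OF xU] by auto
  have c: "real (card (opts x)) \<ge> 2 * real I / 3" using opts_V opts_W assms DS_V xU by blast
  have Ip: "real I > 0" using Ipos by simp
  have "measure_pmf.prob (Dst x) S = real (card (opts x \<inter> S)) / real (card (opts x))"
    using Dst_opts[OF assms(1)] measure_pmf_of_set[OF ne fin] by simp
  also have "\<dots> \<le> real (card (opts x \<inter> S)) / (2 * real I / 3)"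
    using c Ip by (intro divide_left_mono) auto
  also have "real (card (opts x \<inter> S)) \<le> real (card S)"
    using assms(2) by (simp add: card_mono)
  hence "real (card (opts x \<inter> S)) / (2 * real I / 3) \<le> real (card S) / (2 * real I / 3)"
    using Ip by (intro divide_right_mono) auto
  finally show ?thesis by (simp add: field_simps)
qed

lemma q_zero:
  assumes "x \<in> V" "x \<notin> DS" "d \<notin> S"
  shows "measure_pmf.prob (Dst x) S = 0"
  using Dst_V_nDS[OF assms(1,2)] assms(3) by (simp add: measure_return)

lemma parity_pred:
  "even ((c - 1) mod MM) \<longleftrightarrow> odd (c::int)"
proof -
  have "((c - 1) mod MM) mod 2 = (c - 1) mod 2" by (simp add: mod_mod_cancel)
  hence "even ((c - 1) mod MM) \<longleftrightarrow> even (c - 1)" by (simp only: even_iff_mod_2_eq_zero)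
  thus ?thesis by simp
qed

lemma card_lvl_W:
  "card {w \<in> W. 2 * int (lvl w) + 1 = c'} \<le> I"
proof (cases "{w \<in> W. 2 * int (lvl w) + 1 = c'} = {}")
  case True show ?thesis unfolding True by simp
next
  case False
  then obtain w0 where w0: "w0 \<in> W" "2 * int (lvl w0) + 1 = c'" by auto
  have "{w \<in> W. 2 * int (lvl w) + 1 = c'} = {w \<in> W. lvl w = lvl w0}" using w0 by auto
  moreover have "lvl w0 < K" using lvl_lt w0 by auto
  ultimately show ?thesis using cardL by simp
qed

lemma card_lvl_DS:
  "real (card {v \<in> DS. 2 * int (lvl v) = c'}) \<le> real I / 3"
proof (cases "{v \<in> DS. 2 * int (lvl v) = c'} = {}")
  case True show ?thesis unfolding True by simp
next
  case False
  then obtain v0 where v0: "v0 \<in> DS" "2 * int (lvl v0) = c'" by auto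
  have "{v \<in> DS. 2 * int (lvl v) = c'} = {v \<in> V. lvl v = lvl v0 \<and> d \<in> failed_nbrs F v}" using v0 by (auto simp: DS_def)
  moreover have "lvl v0 < K" using lvl_lt v0 DS_V by auto
  ultimately show ?thesis using cF dW by simp
qed

definition mu :: "int \<Rightarrow> real" where "mu c = (if even c then 3/2 else 1/2)"

lemma mu_bound:
  assumes "S \<subseteq> Dom" "\<forall>y\<in>S. cls y = c"
  shows "(\<Sum>x\<in>{x\<in>Dom. cls x = (c - 1) mod MM}. measure_pmf.prob (Dst x) S) \<le> mu c * real (card S)"
proof -
  define c' where "c' = (c - 1) mod MM"
  define A where "A = {x\<in>Dom. cls x = c'}"
  have finA: "finite A" using finDom by (simp add: A_def)
  have dS: "d \<notin> S" using assms(1) by (auto simp: Dom_def)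
  have Ip: "real I > 0" using Ipos by simp
  show ?thesis
  proof (cases "even c")
    case True
    hence oc: "odd c'" using parity_pred unfolding c'_def by blast
    have AW: "A \<subseteq> {w \<in> W. 2 * int (lvl w) + 1 = c'}"
    proof
      fix x assume "x \<in> A"
      hence "x \<in> Dom" "cls x = c'" by (auto simp: A_def)
      thus "x \<in> {w \<in> W. 2 * int (lvl w) + 1 = c'}" using oc by (auto simp: cls_def Dom_def split: if_splits)
    qed
    have "card A \<le> card {w \<in> W. 2 * int (lvl w) + 1 = c'}" using AW finW by (intro card_mono) auto
    hence cA: "card A \<le> I" using card_lvl_W[of c'] by linarith
    have finS: "finite S" using assms(1) finDom finite_subset by blast
    have "(\<Sum>x\<in>A. measure_pmf.prob (Dst x) S) \<le> (\<Sum>x\<in>A. 3 * real (card S) / (2 * real I))"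
      using AW finS by (intro sum_mono q_bound) auto
    also have "\<dots> = real (card A) * (3 * real (card S) / (2 * real I))" by simp
    also have "\<dots> \<le> real I * (3 * real (card S) / (2 * real I))"
      using cA by (intro mult_right_mono) auto
    also have "\<dots> = mu c * real (card S)" using True Ip by (simp add: mu_def)
    finally show ?thesis unfolding A_def c'_def .
  next
    case False
    hence ec: "even c'" using parity_pred unfolding c'_def by blast
    have AV: "A \<subseteq> {v \<in> V. 2 * int (lvl v) = c'}"
    proof
      fix x assume "x \<in> A"
      hence "x \<in> Dom" "cls x = c'" by (auto simp: A_def)
      thus "x \<in> {v \<in> V. 2 * int (lvl v) = c'}" using ec by (auto simp: cls_def Dom_def split: if_splits)
    qed
    have "(\<Sum>x\<in>A. measure_pmf.prob (Dst x) S) = (\<Sum>x\<in>A \<inter> DS. measure_pmf.prob (Dst x) S)"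
      using AV q_zero dS finA by (intro sum.mono_neutral_right) auto
    also have "\<dots> \<le> (\<Sum>x\<in>A \<inter> DS. 3 * real (card S) / (2 * real I))"
      using assms(1) finDom finite_subset by (intro sum_mono q_bound) auto
    also have "\<dots> = real (card (A \<inter> DS)) * (3 * real (card S) / (2 * real I))" by simp
    also have "\<dots> \<le> (real I / 3) * (3 * real (card S) / (2 * real I))"
    proof -
      have "A \<inter> DS \<subseteq> {v \<in> DS. 2 * int (lvl v) = c'}" using AV by auto
      hence "card (A \<inter> DS) \<le> card {v \<in> DS. 2 * int (lvl v) = c'}"
        using finV DS_V by (intro card_mono) (auto intro: rev_finite_subset)
      hence "real (card (A \<inter> DS)) \<le> real I / 3" using card_lvl_DS[of c'] by linarith
      thus ?thesis by (intro mult_right_mono) auto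
    qed
    also have "\<dots> = mu c * real (card S)" using False Ip by (simp add: mu_def)
    finally show ?thesis unfolding A_def c'_def .
  qed
qed

lemma half_bound:
  assumes "x \<in> W"
  shows "measure_pmf.prob (Dst x) DS \<le> 1/2"
proof -
  have xU: "x \<in> V \<union> W" using assms by auto
  have fin: "finite (opts x)" and ne: "opts x \<noteq> {}" using opts_fin[OF xU] opts_ne[OF xU] by auto
  have c: "real (card (opts x)) \<ge> 2 * real I / 3" using opts_W assms by blast
  have Ip: "real I > 0" using Ipos by simp
  have j: "(lvl x + 1) mod K < K" using Kpos by simp
  have sub: "opts x \<inter> DS \<subseteq> {v \<in> V. lvl v = (lvl x + 1) mod K \<and> d \<in> failed_nbrs F v}"
    using opts_W[OF assms] by (auto simp: DS_def)
  have "real (card (opts x \<inter> DS)) \<le> real (card {v \<in> V. lvl v = (lvl x + 1) mod K \<and> d \<in> failed_nbrs F v})"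
    using card_mono[OF _ sub] finV by simp
  also have "\<dots> \<le> real I / 3" using cF j dW by simp
  finally have a: "real (card (opts x \<inter> DS)) \<le> real I / 3" .
  have "measure_pmf.prob (Dst x) DS = real (card (opts x \<inter> DS)) / real (card (opts x))"
    using Dst_opts[of x] assms measure_pmf_of_set[OF ne fin] by simp
  also have "\<dots> \<le> (real I / 3) / (2 * real I / 3)"
    using a c Ip by (intro frac_le) auto
  also have "\<dots> = 1/2" using Ip by simp
  finally show ?thesis .
qed

end



context PB begin

definition pre :: "(nat \<Rightarrow> nat) \<Rightarrow> nat set \<Rightarrow> nat set" where "pre \<alpha> S = {x \<in> Dom. \<alpha> x \<in> S}"
definition lay :: "(nat \<Rightarrow> nat) \<Rightarrow> nat \<Rightarrow> nat set \<Rightarrow> nat set" where "lay \<alpha> i S = (pre \<alpha> ^^ i) S"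
definition th :: real where "th = 1/1000"
definition beta :: "int \<Rightarrow> real" where "beta c = (if even c then 1/80 else 7/1000)"

lemma lay_shift: "lay \<alpha> (Suc i) S = lay \<alpha> i (pre \<alpha> S)"
  by (simp add: lay_def funpow_swap1)

lemma lay_one: "lay \<alpha> (Suc 0) S = pre \<alpha> S" by (simp add: lay_def)

lemma beta_nonneg: "beta c \<ge> 0" by (simp add: beta_def)

lemma MMpos: "MM > 0" using Kpos by simp

lemma numeric:
  "mu c * (exp (th + beta ((c - 1) mod MM)) - 1) \<le> beta c"
proof (cases "even c")
  case True
  hence o: "odd ((c - 1) mod MM)" using parity_pred by blast
  have h: "exp (8/1000::real) \<le> 1 + 8/1000 + (8/1000)^2" by (rule exp_bound) auto
  have q: "(8/1000::real)^2 = 64/1000000" by (simp add: power2_eq_square)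
  have h2: "exp (8/1000::real) \<le> 1 + 8/1000 + 64/1000000" using h unfolding q .
  have gen: "\<And>y::real. y \<le> 1 + 8/1000 + 64/1000000 \<Longrightarrow> 3/2 * (y - 1) \<le> 1/80" by simp
  have "3/2 * (exp (8/1000::real) - 1) \<le> 1/80" using gen[OF h2] .
  moreover have eq: "th + beta ((c - 1) mod MM) = 8/1000" using o by (simp add: th_def beta_def)
  ultimately show ?thesis unfolding eq using True by (simp add: mu_def beta_def)
next
  case False
  hence o: "even ((c - 1) mod MM)" using parity_pred by blast
  have h: "exp (27/2000::real) \<le> 1 + 27/2000 + (27/2000)^2" by (rule exp_bound) auto
  have q: "(27/2000::real)^2 = 729/4000000" by (simp add: power2_eq_square)
  have h2: "exp (27/2000::real) \<le> 1 + 27/2000 + 729/4000000" using h unfolding q .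
  have gen: "\<And>y::real. y \<le> 1 + 27/2000 + 729/4000000 \<Longrightarrow> 1/2 * (y - 1) \<le> 7/1000" by simp
  have "1/2 * (exp (27/2000::real) - 1) \<le> 7/1000" using gen[OF h2] .
  moreover have eq: "th + beta ((c - 1) mod MM) = 27/2000" using o by (simp add: th_def beta_def)
  ultimately show ?thesis unfolding eq using False by (simp add: mu_def beta_def)
qed

lemma pred_succ: "0 \<le> a \<Longrightarrow> a < MM \<Longrightarrow> ((a + 1) mod MM - 1) mod MM = a"
  by (simp add: mod_diff_left_eq)

lemma mod_ne:
  assumes "1 \<le> i" "int i < MM"
  shows "(c - int i) mod MM \<noteq> c mod MM"
proof
  assume "(c - int i) mod MM = c mod MM"
  hence "MM dvd (c - int i) - c" by (simp only: mod_eq_dvd_iff)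
  hence "MM dvd - int i" by simp
  hence "MM dvd int i" by (simp only: dvd_minus_iff)
  hence "MM \<le> int i" using assms by (intro zdvd_imp_le) auto
  thus False using assms by simp
qed

lemma prod_1p_le_exp:
  fixes a :: "nat \<Rightarrow> real"
  assumes "finite A" "\<forall>x\<in>A. a x \<ge> 0"
  shows "(\<Prod>x\<in>A. 1 + a x) \<le> exp (\<Sum>x\<in>A. a x)"
proof -
  have "(\<Prod>x\<in>A. 1 + a x) \<le> (\<Prod>x\<in>A. exp (a x))"
    using assms by (intro prod_mono) (auto simp: add_nonneg_nonneg exp_ge_add_one_self)
  also have "\<dots> = exp (\<Sum>x\<in>A. a x)" by (simp add: exp_sum assms(1))
  finally show ?thesis .
qed

lemma prob_UNIV_pmf: "measure_pmf.prob p UNIV = 1"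
  using measure_pmf.prob_space by simp

lemma layer_bound:
  "int r < MM \<Longrightarrow> 0 \<le> c \<Longrightarrow> c < MM \<Longrightarrow> S \<subseteq> Dom \<Longrightarrow> (\<forall>y\<in>S. cls y = c) \<Longrightarrow>
   (\<forall>x\<in>Dom. (\<exists>i. 1 \<le> i \<and> i \<le> r \<and> cls x = (c - int i) mod MM) \<longrightarrow> B x = UNIV) \<Longrightarrow>
   measure_pmf.prob MP (Pi Dom B \<inter> {\<alpha>. t \<le> th * (\<Sum>i<r. real (card (lay \<alpha> (Suc i) S)))})
     \<le> measure_pmf.prob MP (Pi Dom B) * exp (beta c * real (card S) - t)"
proof (induction r arbitrary: c S B t)
  case 0
  show ?case
  proof (cases "t \<le> 0")
    case True
    have "beta c * real (card S) \<ge> 0" using beta_nonneg[of c] by simp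
    hence "exp (beta c * real (card S) - t) \<ge> 1" using True by simp
    hence "measure_pmf.prob MP (Pi Dom B) \<le> measure_pmf.prob MP (Pi Dom B) * exp (beta c * real (card S) - t)"
      by (simp add: mult_le_cancel_left1)
    moreover have "measure_pmf.prob MP (Pi Dom B \<inter> {\<alpha>. t \<le> th * (\<Sum>i<0. real (card (lay \<alpha> (Suc i) S)))}) \<le> measure_pmf.prob MP (Pi Dom B)"
      by (intro measure_pmf.finite_measure_mono) auto
    ultimately show ?thesis by linarith
  next
    case False
    hence "Pi Dom B \<inter> {\<alpha>. t \<le> th * (\<Sum>i<0. real (card (lay \<alpha> (Suc i) S)))} = {}" by auto
    thus ?thesis by simp
  qed
next
  case (Suc r)
  define c' where "c' = (c - 1) mod MM"
  define A where "A = {x\<in>Dom. cls x = c'}"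
  define p where "p x = measure_pmf.prob (Dst x) S" for x
  define BT where "BT T = (\<lambda>x. if x \<in> A then (if x \<in> T then S else - S) else B x)" for T
  define Ev where "Ev T = Pi Dom (BT T) \<inter> {\<alpha>. t - th * real (card T) \<le> th * (\<Sum>i<r. real (card (lay \<alpha> (Suc i) T)))}" for T
  define \<gamma> where "\<gamma> = th + beta c'"
  have finA: "finite A" using finDom by (simp add: A_def)
  have AD: "A \<subseteq> Dom" by (auto simp: A_def)
  have c'r: "0 \<le> c'" "c' < MM" using MMpos by (auto simp: c'_def)
  have BA: "\<forall>x\<in>A. B x = UNIV"
    using Suc.prems(6) by (auto simp: A_def c'_def intro!: exI[of _ 1])
  have finS: "finite S" using Suc.prems(4) finDom finite_subset by blast
  have cover: "Pi Dom B \<inter> {\<alpha>. t \<le> th * (\<Sum>i<Suc r. real (card (lay \<alpha> (Suc i) S)))} \<inter> set_pmf MP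
      \<subseteq> (\<Union>T\<in>Pow A. Ev T)"
  proof
    fix \<alpha> assume a: "\<alpha> \<in> Pi Dom B \<inter> {\<alpha>. t \<le> th * (\<Sum>i<Suc r. real (card (lay \<alpha> (Suc i) S)))} \<inter> set_pmf MP"
    define T where "T = pre \<alpha> S"
    have TA: "T \<in> Pow A"
    proof
      show "T \<subseteq> A"
      proof
        fix x assume "x \<in> T"
        hence x: "x \<in> Dom" "\<alpha> x \<in> S" by (auto simp: T_def pre_def)
        have s: "\<alpha> x \<in> set_pmf (Dst x)" using supp_MP(1)[of \<alpha> x] a x by auto
        have nd: "\<alpha> x \<noteq> d" using x Suc.prems(4) by (auto simp: Dom_def)
        have "cls (\<alpha> x) = (cls x + 1) mod MM" by (rule cls_succ[OF x(1) s nd])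
        moreover have "cls (\<alpha> x) = c" using Suc.prems(5) x by auto
        moreover have "0 \<le> cls x" "cls x < MM" using cls_range x(1) by (auto simp: Dom_def)
        ultimately have "cls x = c'" unfolding c'_def using pred_succ by metis
        thus "x \<in> A" using x by (simp add: A_def)
      qed
    qed
    have inB: "\<alpha> \<in> Pi Dom (BT T)"
      using a by (auto simp: BT_def T_def pre_def)
    have l2: "lay \<alpha> (Suc (Suc i)) S = lay \<alpha> (Suc i) T" for i
      unfolding T_def by (rule lay_shift)
    have "(\<Sum>i<Suc r. real (card (lay \<alpha> (Suc i) S))) = real (card (lay \<alpha> (Suc 0) S)) + (\<Sum>i<r. real (card (lay \<alpha> (Suc (Suc i)) S)))"
      by (rule sum.lessThan_Suc_shift)
    also have "\<dots> = real (card T) + (\<Sum>i<r. real (card (lay \<alpha> (Suc i) T)))"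
      unfolding l2 lay_one T_def by (rule refl)
    finally have eqs: "(\<Sum>i<Suc r. real (card (lay \<alpha> (Suc i) S))) = real (card T) + (\<Sum>i<r. real (card (lay \<alpha> (Suc i) T)))" .
    have t1: "t \<le> th * (\<Sum>i<Suc r. real (card (lay \<alpha> (Suc i) S)))" using a by blast
    have "t \<le> th * (real (card T) + (\<Sum>i<r. real (card (lay \<alpha> (Suc i) T))))" using t1 unfolding eqs .
    hence "t \<le> th * real (card T) + th * (\<Sum>i<r. real (card (lay \<alpha> (Suc i) T)))" by (simp only: distrib_left)
    hence "t - th * real (card T) \<le> th * (\<Sum>i<r. real (card (lay \<alpha> (Suc i) T)))" by linarith
    hence "\<alpha> \<in> Ev T" using inB by (simp add: Ev_def)
    thus "\<alpha> \<in> (\<Union>T\<in>Pow A. Ev T)" using TA by blast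
  qed
  have rectT: "measure_pmf.prob MP (Pi Dom (BT T)) = measure_pmf.prob MP (Pi Dom B) * ((\<Prod>x\<in>T. p x) * (\<Prod>x\<in>A - T. 1 - p x))"
    if "T \<subseteq> A" for T
  proof -
    have "measure_pmf.prob MP (Pi Dom (BT T)) = (\<Prod>x\<in>Dom. measure_pmf.prob (Dst x) (BT T x))" by (rule rect)
    also have "\<dots> = (\<Prod>x\<in>Dom - A. measure_pmf.prob (Dst x) (BT T x)) * (\<Prod>x\<in>A. measure_pmf.prob (Dst x) (BT T x))"
      using prod.subset_diff[OF AD finDom] by simp
    also have "(\<Prod>x\<in>Dom - A. measure_pmf.prob (Dst x) (BT T x)) = (\<Prod>x\<in>Dom - A. measure_pmf.prob (Dst x) (B x))"
      by (intro prod.cong) (auto simp: BT_def)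
    also have "(\<Prod>x\<in>A. measure_pmf.prob (Dst x) (BT T x)) = (\<Prod>x\<in>A - T. measure_pmf.prob (Dst x) (BT T x)) * (\<Prod>x\<in>T. measure_pmf.prob (Dst x) (BT T x))"
      using prod.subset_diff[OF that finA] by simp
    also have "(\<Prod>x\<in>A - T. measure_pmf.prob (Dst x) (BT T x)) = (\<Prod>x\<in>A - T. 1 - p x)"
    proof (intro prod.cong refl)
      fix x assume "x \<in> A - T"
      hence "BT T x = UNIV - S" by (auto simp: BT_def)
      moreover have "measure_pmf.prob (Dst x) (space (measure_pmf (Dst x)) - S) = 1 - p x"
        unfolding p_def by (rule measure_pmf.prob_compl) simp
      ultimately show "measure_pmf.prob (Dst x) (BT T x) = 1 - p x" by simp
    qed
    also have "(\<Prod>x\<in>T. measure_pmf.prob (Dst x) (BT T x)) = (\<Prod>x\<in>T. p x)"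
      using that by (intro prod.cong) (auto simp: BT_def p_def)
    also have "measure_pmf.prob MP (Pi Dom B) = (\<Prod>x\<in>Dom - A. measure_pmf.prob (Dst x) (B x)) * (\<Prod>x\<in>A. measure_pmf.prob (Dst x) (B x))"
      using rect prod.subset_diff[OF AD finDom] by simp
    moreover have "(\<Prod>x\<in>A. measure_pmf.prob (Dst x) (B x)) = 1"
      using BA by (simp add: prob_UNIV_pmf)
    ultimately show ?thesis by (simp add: algebra_simps)
  qed
  have ih: "measure_pmf.prob MP (Ev T) \<le> measure_pmf.prob MP (Pi Dom (BT T)) * exp (beta c' * real (card T) - (t - th * real (card T)))"
    if "T \<in> Pow A" for T
    unfolding Ev_def
  proof (rule Suc.IH)
    show "int r < MM" using Suc.prems(1) by simp
    show "0 \<le> c'" "c' < MM" using c'r by auto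
    show "T \<subseteq> Dom" using that AD by auto
    show "\<forall>y\<in>T. cls y = c'" using that by (auto simp: A_def)
    show "\<forall>x\<in>Dom. (\<exists>i\<ge>1. i \<le> r \<and> cls x = (c' - int i) mod MM) \<longrightarrow> BT T x = UNIV"
    proof (intro ballI impI)
      fix x assume x: "x \<in> Dom" and "\<exists>i\<ge>1. i \<le> r \<and> cls x = (c' - int i) mod MM"
      then obtain i where i: "1 \<le> i" "i \<le> r" "cls x = (c' - int i) mod MM" by auto
      have "(c' - int i) mod MM \<noteq> c' mod MM" using i Suc.prems(1) by (intro mod_ne) auto
      hence "cls x \<noteq> c'" using i c'r by simp
      hence xA: "x \<notin> A" by (simp add: A_def)
      have "cls x = (c - int (Suc i)) mod MM" using i(3) unfolding c'_def by (simp add: mod_diff_left_eq algebra_simps)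
      moreover have "1 \<le> Suc i \<and> Suc i \<le> Suc r" using i by simp
      ultimately have "B x = UNIV" using Suc.prems(6) x by blast
      thus "BT T x = UNIV" using xA by (simp add: BT_def)
    qed
  qed
  let ?P = "measure_pmf.prob MP (Pi Dom B)"
  have S1: "measure_pmf.prob MP (Pi Dom B \<inter> {\<alpha>. t \<le> th * (\<Sum>i<Suc r. real (card (lay \<alpha> (Suc i) S)))})
      \<le> (\<Sum>T\<in>Pow A. measure_pmf.prob MP (Ev T))"
  proof -
    have "measure_pmf.prob MP (Pi Dom B \<inter> {\<alpha>. t \<le> th * (\<Sum>i<Suc r. real (card (lay \<alpha> (Suc i) S)))})
      = measure_pmf.prob MP (Pi Dom B \<inter> {\<alpha>. t \<le> th * (\<Sum>i<Suc r. real (card (lay \<alpha> (Suc i) S)))} \<inter> set_pmf MP)"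
      by (rule measure_Int_set_pmf[symmetric])
    also have "\<dots> \<le> measure_pmf.prob MP (\<Union>T\<in>Pow A. Ev T)"
      using cover by (intro measure_pmf.finite_measure_mono) auto
    also have "\<dots> \<le> (\<Sum>T\<in>Pow A. measure_pmf.prob MP (Ev T))"
      using finA by (intro measure_pmf.finite_measure_subadditive_finite) auto
    finally show ?thesis .
  qed
  have S2: "(\<Sum>T\<in>Pow A. measure_pmf.prob MP (Ev T)) \<le> (\<Sum>T\<in>Pow A. ?P * exp (- t) * ((\<Prod>x\<in>T. p x * exp \<gamma>) * (\<Prod>x\<in>A - T. 1 - p x)))"
  proof (rule sum_mono)
    fix T assume T: "T \<in> Pow A"
    have pe: "(\<Prod>x\<in>T. exp \<gamma>) = exp (real (card T) * \<gamma>)" by (simp add: exp_of_nat_mult)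
    have "exp (beta c' * real (card T) - (t - th * real (card T))) = exp (- t + real (card T) * \<gamma>)"
      by (rule arg_cong[where f=exp]) (simp add: \<gamma>_def algebra_simps)
    also have "\<dots> = exp (- t) * (\<Prod>x\<in>T. exp \<gamma>)" unfolding pe by (rule exp_add)
    finally have e: "exp (beta c' * real (card T) - (t - th * real (card T))) = exp (- t) * (\<Prod>x\<in>T. exp \<gamma>)" .
    have "measure_pmf.prob MP (Ev T) \<le> measure_pmf.prob MP (Pi Dom (BT T)) * (exp (- t) * (\<Prod>x\<in>T. exp \<gamma>))"
      using ih[OF T] unfolding e .
    also have "\<dots> = ?P * ((\<Prod>x\<in>T. p x) * (\<Prod>x\<in>A - T. 1 - p x)) * (exp (- t) * (\<Prod>x\<in>T. exp \<gamma>))"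
      using rectT[of T] T by simp
    also have "\<dots> = ?P * exp (- t) * (((\<Prod>x\<in>T. p x) * (\<Prod>x\<in>T. exp \<gamma>)) * (\<Prod>x\<in>A - T. 1 - p x))"
      by (simp only: mult_ac)
    also have "(\<Prod>x\<in>T. p x) * (\<Prod>x\<in>T. exp \<gamma>) = (\<Prod>x\<in>T. p x * exp \<gamma>)"
      by (rule prod.distrib[symmetric])
    finally show "measure_pmf.prob MP (Ev T) \<le> ?P * exp (- t) * ((\<Prod>x\<in>T. p x * exp \<gamma>) * (\<Prod>x\<in>A - T. 1 - p x))" .
  qed
  have S3: "(\<Sum>T\<in>Pow A. ?P * exp (- t) * ((\<Prod>x\<in>T. p x * exp \<gamma>) * (\<Prod>x\<in>A - T. 1 - p x)))
     = ?P * exp (- t) * (\<Prod>x\<in>A. p x * exp \<gamma> + (1 - p x))"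
    unfolding prod_add[OF finA, of "\<lambda>x. p x * exp \<gamma>" "\<lambda>x. 1 - p x"] sum_distrib_left by (rule refl)
  have gpos: "exp \<gamma> - 1 \<ge> 0"
  proof -
    have "\<gamma> \<ge> 0" by (simp add: \<gamma>_def th_def beta_nonneg)
    thus ?thesis by simp
  qed
  have S4: "(\<Prod>x\<in>A. p x * exp \<gamma> + (1 - p x)) \<le> exp (beta c * real (card S))"
  proof -
    have "(\<Prod>x\<in>A. p x * exp \<gamma> + (1 - p x)) = (\<Prod>x\<in>A. 1 + p x * (exp \<gamma> - 1))"
      by (intro prod.cong) (auto simp: algebra_simps)
    also have "\<dots> \<le> exp (\<Sum>x\<in>A. p x * (exp \<gamma> - 1))"
      using gpos by (intro prod_1p_le_exp[OF finA]) (simp add: p_def)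
    also have "(\<Sum>x\<in>A. p x * (exp \<gamma> - 1)) = (exp \<gamma> - 1) * (\<Sum>x\<in>A. p x)"
      by (simp add: sum_distrib_right mult.commute)
    also have "\<dots> \<le> (exp \<gamma> - 1) * (mu c * real (card S))"
    proof (rule mult_left_mono[OF _ gpos])
      show "(\<Sum>x\<in>A. p x) \<le> mu c * real (card S)"
        using mu_bound[OF Suc.prems(4,5)] by (simp add: A_def c'_def p_def)
    qed
    also have "\<dots> = (mu c * (exp \<gamma> - 1)) * real (card S)" by (simp only: mult_ac)
    also have "\<dots> \<le> beta c * real (card S)"
      using numeric[of c] by (intro mult_right_mono) (auto simp: \<gamma>_def c'_def)
    finally show ?thesis by simp
  qed
  have Pn: "?P * exp (- t) \<ge> 0" by simp
  have "measure_pmf.prob MP (Pi Dom B \<inter> {\<alpha>. t \<le> th * (\<Sum>i<Suc r. real (card (lay \<alpha> (Suc i) S)))})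
      \<le> ?P * exp (- t) * (\<Prod>x\<in>A. p x * exp \<gamma> + (1 - p x))" using S1 S2 S3 by linarith
  also have "\<dots> \<le> ?P * exp (- t) * exp (beta c * real (card S))"
    by (rule mult_left_mono[OF S4 Pn])
  also have "\<dots> = ?P * exp (beta c * real (card S) - t)"
    by (simp add: exp_diff exp_minus field_simps)
  finally show ?case .
qed

end


context PB begin

fun chain :: "(nat \<Rightarrow> nat) \<Rightarrow> nat \<Rightarrow> nat \<Rightarrow> bool" where
  "chain \<alpha> 0 x = True"
| "chain \<alpha> (Suc j) x = (\<alpha> x \<in> DS \<and> chain \<alpha> j (\<alpha> (\<alpha> x)))"

lemma mod_ne_add:
  assumes "1 \<le> k" "int k < MM"
  shows "(c + int k) mod MM \<noteq> c mod MM"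
  using mod_ne[OF assms, of "c + int k"] by auto

lemma rect2:
  assumes "x \<in> Dom" "v \<in> Dom" "x \<noteq> v" "B x = UNIV" "B v = UNIV"
  shows "measure_pmf.prob MP (Pi Dom (B(x := {v}, v := {w}))) = measure_pmf.prob MP (Pi Dom B) * (pmf (Dst x) v * pmf (Dst v) w)"
proof -
  let ?B2 = "B(x := {v}, v := {w})"
  let ?R = "\<Prod>y\<in>Dom - {x} - {v}. measure_pmf.prob (Dst y) (B y)"
  have fx: "finite (Dom - {x})" using finDom by simp
  have vx: "v \<in> Dom - {x}" using assms by simp
  have "measure_pmf.prob MP (Pi Dom ?B2) = (\<Prod>y\<in>Dom. measure_pmf.prob (Dst y) (?B2 y))" by (rule rect)
  also have "\<dots> = measure_pmf.prob (Dst x) (?B2 x) * (\<Prod>y\<in>Dom - {x}. measure_pmf.prob (Dst y) (?B2 y))"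
    by (rule prod.remove[OF finDom assms(1)])
  also have "(\<Prod>y\<in>Dom - {x}. measure_pmf.prob (Dst y) (?B2 y)) = measure_pmf.prob (Dst v) (?B2 v) * (\<Prod>y\<in>Dom - {x} - {v}. measure_pmf.prob (Dst y) (?B2 y))"
    by (rule prod.remove[OF fx vx])
  also have "(\<Prod>y\<in>Dom - {x} - {v}. measure_pmf.prob (Dst y) (?B2 y)) = ?R"
    by (intro prod.cong) auto
  finally have e0: "measure_pmf.prob MP (Pi Dom ?B2) = measure_pmf.prob (Dst x) (?B2 x) * (measure_pmf.prob (Dst v) (?B2 v) * ?R)" .
  have b1: "?B2 x = {v}" using assms(3) by simp
  have b2: "?B2 v = {w}" by simp
  have e1: "measure_pmf.prob MP (Pi Dom ?B2) = pmf (Dst x) v * (pmf (Dst v) w * ?R)"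
    using e0 unfolding b1 b2 measure_pmf_single .
  have "measure_pmf.prob MP (Pi Dom B) = (\<Prod>y\<in>Dom. measure_pmf.prob (Dst y) (B y))" by (rule rect)
  also have "\<dots> = measure_pmf.prob (Dst x) (B x) * (\<Prod>y\<in>Dom - {x}. measure_pmf.prob (Dst y) (B y))"
    by (rule prod.remove[OF finDom assms(1)])
  also have "(\<Prod>y\<in>Dom - {x}. measure_pmf.prob (Dst y) (B y)) = measure_pmf.prob (Dst v) (B v) * ?R"
    by (rule prod.remove[OF fx vx])
  finally have e2: "measure_pmf.prob MP (Pi Dom B) = ?R"
    using assms(4,5) by (simp add: prob_UNIV_pmf)
  show ?thesis using e1 e2 by (simp add: algebra_simps)
qed

lemma chain_bound:
  "int (2*j) \<le> MM \<Longrightarrow> x \<in> W \<Longrightarrow> x \<noteq> d \<Longrightarrow>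
   (\<forall>y\<in>Dom. (\<exists>i<2*j. cls y = (cls x + int i) mod MM) \<longrightarrow> B y = UNIV) \<Longrightarrow>
   measure_pmf.prob MP (Pi Dom B \<inter> {\<alpha>. chain \<alpha> j x}) \<le> measure_pmf.prob MP (Pi Dom B) / 2^j"
proof (induction j arbitrary: x B)
  case 0
  show ?case by (simp add: measure_pmf.finite_measure_mono)
next
  case (Suc j)
  define Vs where "Vs = {v\<in>DS. cls v = (cls x + 1) mod MM}"
  define Ws where "Ws = {w\<in>W - {d}. cls w = (cls x + 2) mod MM}"
  define B2 where "B2 v w = B(x := {v}, v := {w})" for v w
  define E where "E p = Pi Dom (B2 (fst p) (snd p)) \<inter> {\<alpha>. chain \<alpha> j (snd p)}" for p
  let ?P = "measure_pmf.prob MP (Pi Dom B)"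
  have xD: "x \<in> Dom" using Suc.prems by (simp add: Dom_def)
  have xr: "0 \<le> cls x" "cls x < MM" using cls_range[of x] Suc.prems by auto
  have finVs: "finite Vs" using finV DS_V by (auto simp: Vs_def intro: rev_finite_subset)
  have finWs: "finite Ws" using finW by (simp add: Ws_def)
  have Bx: "B x = UNIV" using Suc.prems(4) xD xr by (auto intro!: exI[of _ 0])
  have cover: "Pi Dom B \<inter> {\<alpha>. chain \<alpha> (Suc j) x} \<inter> set_pmf MP \<subseteq> (\<Union>p\<in>Vs \<times> Ws. E p)"
  proof
    fix \<alpha> assume a: "\<alpha> \<in> Pi Dom B \<inter> {\<alpha>. chain \<alpha> (Suc j) x} \<inter> set_pmf MP"
    define v where "v = \<alpha> x"
    define w where "w = \<alpha> v"
    have vDS: "v \<in> DS" and ch: "chain \<alpha> j w" using a by (auto simp: v_def w_def)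
    have vV: "v \<in> V" using vDS DS_V by auto
    have vD: "v \<in> Dom" using vV dnV by (auto simp: Dom_def)
    have s1: "v \<in> set_pmf (Dst x)" using supp_MP(1)[of \<alpha> x] a xD by (auto simp: v_def)
    have s2: "w \<in> set_pmf (Dst v)" using supp_MP(1)[of \<alpha> v] a vD by (auto simp: w_def)
    have cv: "cls v = (cls x + 1) mod MM" using cls_succ[OF xD s1] vV dnV by auto
    have w: "w \<in> W" "w \<noteq> d" using supp(3)[OF vD s2 vDS] by auto
    have "cls w = (cls v + 1) mod MM" using cls_succ[OF vD s2 w(2)] .
    hence cw: "cls w = (cls x + 2) mod MM" using cv by (simp add: mod_add_left_eq add.assoc)
    have xv: "x \<noteq> v" using Suc.prems(2) vV disj by auto
    have "\<alpha> \<in> Pi Dom (B2 v w)" using a xv by (auto simp: B2_def v_def w_def)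
    hence "\<alpha> \<in> E (v, w)" using ch by (simp add: E_def)
    moreover have "(v, w) \<in> Vs \<times> Ws" using vDS cv w cw by (simp add: Vs_def Ws_def)
    ultimately show "\<alpha> \<in> (\<Union>p\<in>Vs \<times> Ws. E p)" by blast
  qed
  have bnd: "measure_pmf.prob MP (E p) \<le> ?P * (pmf (Dst x) (fst p) * pmf (Dst (fst p)) (snd p)) / 2^j"
    if p: "p \<in> Vs \<times> Ws" for p
  proof -
    obtain v w where pe: "p = (v, w)" by force
    have v: "v \<in> DS" "cls v = (cls x + 1) mod MM" using p pe by (auto simp: Vs_def)
    have w: "w \<in> W" "w \<noteq> d" "cls w = (cls x + 2) mod MM" using p pe by (auto simp: Ws_def)
    have vV: "v \<in> V" using v DS_V by auto
    have vD: "v \<in> Dom" using vV dnV by (auto simp: Dom_def)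
    have xv: "x \<noteq> v" using Suc.prems(2) vV disj by auto
    have Bv: "B v = UNIV" using Suc.prems(4) vD v(2) by (auto intro!: exI[of _ 1])
    have "measure_pmf.prob MP (E p) \<le> measure_pmf.prob MP (Pi Dom (B2 v w)) / 2^j"
      unfolding E_def pe fst_conv snd_conv
    proof (rule Suc.IH)
      show "int (2 * j) \<le> MM" using Suc.prems(1) by simp
      show "w \<in> W" "w \<noteq> d" using w by auto
      show "\<forall>y\<in>Dom. (\<exists>i<2 * j. cls y = (cls w + int i) mod MM) \<longrightarrow> B2 v w y = UNIV"
      proof (intro ballI impI)
        fix y assume y: "y \<in> Dom" and "\<exists>i<2 * j. cls y = (cls w + int i) mod MM"
        then obtain i where i: "i < 2 * j" "cls y = (cls w + int i) mod MM" by auto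
        have cy: "cls y = (cls x + int (i + 2)) mod MM" using i(2) w(3) by (simp add: mod_add_right_eq algebra_simps)
        have "(cls x + int (i + 2)) mod MM \<noteq> cls x mod MM" using i Suc.prems(1) by (intro mod_ne_add) auto
        hence yx: "y \<noteq> x" using cy xr by auto
        have "((cls x + 1) + int (i + 1)) mod MM \<noteq> (cls x + 1) mod MM" using i Suc.prems(1) by (intro mod_ne_add) auto
        hence yv: "y \<noteq> v" using cy v(2) by (auto simp: algebra_simps)
        have "B y = UNIV" using Suc.prems(4) y cy i(1) by (auto intro!: exI[of _ "i + 2"])
        thus "B2 v w y = UNIV" using yx yv by (simp add: B2_def)
      qed
    qed
    also have "measure_pmf.prob MP (Pi Dom (B2 v w)) = ?P * (pmf (Dst x) v * pmf (Dst v) w)"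
      unfolding B2_def using rect2[OF xD vD xv Bx Bv] .
    finally show ?thesis using pe by simp
  qed
  have "measure_pmf.prob MP (Pi Dom B \<inter> {\<alpha>. chain \<alpha> (Suc j) x})
      = measure_pmf.prob MP (Pi Dom B \<inter> {\<alpha>. chain \<alpha> (Suc j) x} \<inter> set_pmf MP)"
    by (rule measure_Int_set_pmf[symmetric])
  also have "\<dots> \<le> measure_pmf.prob MP (\<Union>p\<in>Vs \<times> Ws. E p)"
    using cover by (intro measure_pmf.finite_measure_mono) auto
  also have "\<dots> \<le> (\<Sum>p\<in>Vs \<times> Ws. measure_pmf.prob MP (E p))"
    using finVs finWs by (intro measure_pmf.finite_measure_subadditive_finite) auto
  also have "\<dots> \<le> (\<Sum>p\<in>Vs \<times> Ws. ?P * (pmf (Dst x) (fst p) * pmf (Dst (fst p)) (snd p)) / 2^j)"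
    using bnd by (intro sum_mono) auto
  also have "\<dots> = ?P / 2^j * (\<Sum>p\<in>Vs \<times> Ws. pmf (Dst x) (fst p) * pmf (Dst (fst p)) (snd p))"
    by (simp add: sum_distrib_left sum_divide_distrib)
  finally have main: "measure_pmf.prob MP (Pi Dom B \<inter> {\<alpha>. chain \<alpha> (Suc j) x}) \<le> ?P / 2^j * (\<Sum>p\<in>Vs \<times> Ws. pmf (Dst x) (fst p) * pmf (Dst (fst p)) (snd p))" .
  have "(\<Sum>p\<in>Vs \<times> Ws. pmf (Dst x) (fst p) * pmf (Dst (fst p)) (snd p))
      = (\<Sum>v\<in>Vs. pmf (Dst x) v * (\<Sum>w\<in>Ws. pmf (Dst v) w))"
    by (simp add: sum_distrib_left sum.cartesian_product case_prod_beta)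
  also have "\<dots> \<le> (\<Sum>v\<in>Vs. pmf (Dst x) v * 1)"
  proof (intro sum_mono mult_left_mono)
    fix v
    show "(\<Sum>w\<in>Ws. pmf (Dst v) w) \<le> 1"
      using measure_measure_pmf_finite[OF finWs, of "Dst v"] measure_pmf.prob_le_1[of "Dst v" Ws] by simp
  qed simp
  also have "\<dots> = measure_pmf.prob (Dst x) Vs"
    using measure_measure_pmf_finite[OF finVs] by simp
  also have "\<dots> \<le> measure_pmf.prob (Dst x) DS"
    by (intro measure_pmf.finite_measure_mono) (auto simp: Vs_def)
  also have "\<dots> \<le> 1/2" using half_bound Suc.prems(2) by blast
  finally have inner: "(\<Sum>p\<in>Vs \<times> Ws. pmf (Dst x) (fst p) * pmf (Dst (fst p)) (snd p)) \<le> 1/2" .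
  have "?P / 2^j * (\<Sum>p\<in>Vs \<times> Ws. pmf (Dst x) (fst p) * pmf (Dst (fst p)) (snd p)) \<le> ?P / 2^j * (1/2)"
    by (rule mult_left_mono[OF inner]) simp
  hence "measure_pmf.prob MP (Pi Dom B \<inter> {\<alpha>. chain \<alpha> (Suc j) x}) \<le> ?P / 2^j * (1/2)" using main by linarith
  thus ?case by simp
qed

end


context PB begin

lemma funpow_d: "\<alpha> \<in> set_pmf MP \<Longrightarrow> (\<alpha> ^^ n) d = d"
proof (induction n)
  case (Suc n)
  have "\<alpha> d = d" using supp_MP(2)[OF Suc.prems] by (simp add: Dom_def)
  thus ?case using Suc by simp
qed simp

lemma iter_in_Dom:
  assumes "\<alpha> \<in> set_pmf MP" "s \<in> Dom" "\<forall>i\<le>k. (\<alpha> ^^ i) s \<noteq> d"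
  shows "i \<le> k \<Longrightarrow> (\<alpha> ^^ i) s \<in> Dom"
proof (induction i)
  case 0 thus ?case using assms by simp
next
  case (Suc i)
  hence x: "(\<alpha> ^^ i) s \<in> Dom" by simp
  have "\<alpha> ((\<alpha> ^^ i) s) \<in> set_pmf (Dst ((\<alpha> ^^ i) s))" using supp_MP(1)[OF assms(1) x] .
  hence "\<alpha> ((\<alpha> ^^ i) s) \<in> V \<union> W" using supp(1)[OF x] by blast
  moreover have "(\<alpha> ^^ Suc i) s \<noteq> d" using assms(3) Suc.prems by blast
  ultimately show ?case by (simp add: Dom_def)
qed

lemma chain_from_path:
  assumes a: "\<alpha> \<in> set_pmf MP" and s: "s \<in> Dom" and nd: "\<forall>i\<le>k. (\<alpha> ^^ i) s \<noteq> d" and k: "2 * K - 1 \<le> k"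
  shows "\<exists>w\<in>W - {d}. chain \<alpha> (K - 1) w"
proof -
  have inD: "\<And>i. i \<le> k \<Longrightarrow> (\<alpha> ^^ i) s \<in> Dom" using iter_in_Dom[OF a s nd] .
  have sub: "\<And>b. (\<alpha> ^^ b) s \<in> W \<Longrightarrow> b + 2 * m \<le> k \<Longrightarrow> chain \<alpha> m ((\<alpha> ^^ b) s)" for m
  proof (induction m)
    case 0 thus ?case by simp
  next
    case (Suc m b)
    define x where "x = (\<alpha> ^^ b) s"
    have xD: "x \<in> Dom" using inD Suc.prems by (simp add: x_def)
    have xW: "x \<in> W" using Suc.prems by (simp add: x_def)
    have s1: "\<alpha> x \<in> set_pmf (Dst x)" using supp_MP(1)[OF a xD] .
    have vV: "\<alpha> x \<in> V" using supp(4)[OF xD s1 xW] by simp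
    have e1: "\<alpha> x = (\<alpha> ^^ Suc b) s" by (simp add: x_def)
    have e2: "\<alpha> (\<alpha> x) = (\<alpha> ^^ Suc (Suc b)) s" by (simp add: x_def)
    have vD: "\<alpha> x \<in> Dom" using inD[of "Suc b"] Suc.prems e1 by simp
    have s2: "\<alpha> (\<alpha> x) \<in> set_pmf (Dst (\<alpha> x))" using supp_MP(1)[OF a vD] .
    have "Suc (Suc b) \<le> k" using Suc.prems by simp
    hence "(\<alpha> ^^ Suc (Suc b)) s \<noteq> d" using nd by blast
    hence nd2: "\<alpha> (\<alpha> x) \<noteq> d" using e2 by simp
    have vDS: "\<alpha> x \<in> DS" using supp(2)[OF vD s2 vV] nd2 by blast
    have wW: "\<alpha> (\<alpha> x) \<in> W" using supp(3)[OF vD s2 vDS] by simp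
    have "chain \<alpha> m ((\<alpha> ^^ (Suc (Suc b))) s)"
      using Suc.IH[of "Suc (Suc b)"] wW e2 Suc.prems by simp
    thus ?case using vDS e2 by (simp add: x_def)
  qed
  have Kp: "K \<ge> 1" using Kpos by simp
  show ?thesis
  proof (cases "s \<in> W")
    case True
    have "chain \<alpha> (K - 1) ((\<alpha> ^^ 0) s)" using sub[of 0 "K - 1"] True k Kp by simp
    thus ?thesis using True s by (auto simp: Dom_def)
  next
    case False
    hence sV: "s \<in> V" using s by (auto simp: Dom_def)
    have s1: "\<alpha> s \<in> set_pmf (Dst s)" using supp_MP(1)[OF a s] .
    have "1 \<le> k" using k Kp by simp
    hence "(\<alpha> ^^ 1) s \<noteq> d" using nd by blast
    hence "\<alpha> s \<noteq> d" by simp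
    hence sDS: "s \<in> DS" using supp(2)[OF s s1 sV] by blast
    have wW: "(\<alpha> ^^ 1) s \<in> W" "(\<alpha> ^^ 1) s \<noteq> d" using supp(3)[OF s s1 sDS] by auto
    have "chain \<alpha> (K - 1) ((\<alpha> ^^ 1) s)" using sub[of 1 "K - 1"] wW k Kp by simp
    thus ?thesis using wW by blast
  qed
qed

lemma lay_mem:
  assumes a: "\<alpha> \<in> set_pmf MP" and u: "u \<in> Dom"
  shows "s \<in> Dom \<Longrightarrow> \<forall>i<k. (\<alpha> ^^ i) s \<noteq> d \<Longrightarrow> (\<alpha> ^^ k) s = u \<Longrightarrow> s \<in> lay \<alpha> k {u}"
proof (induction k arbitrary: s)
  case 0 thus ?case by (simp add: lay_def)
next
  case (Suc k)
  have s1: "\<alpha> s \<in> set_pmf (Dst s)" using supp_MP(1)[OF a Suc.prems(1)] .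
  have as: "\<alpha> s \<in> Dom"
  proof (cases k)
    case 0 thus ?thesis using Suc.prems u by simp
  next
    case (Suc k')
    hence "1 < Suc k" by simp
    hence "(\<alpha> ^^ 1) s \<noteq> d" using Suc.prems(2) by blast
    hence "\<alpha> s \<noteq> d" by simp
    thus ?thesis using supp(1)[OF Suc.prems(1) s1] by (simp add: Dom_def)
  qed
  have "\<forall>i<k. (\<alpha> ^^ i) (\<alpha> s) \<noteq> d"
  proof (intro allI impI)
    fix i assume "i < k"
    hence "Suc i < Suc k" by simp
    hence "(\<alpha> ^^ Suc i) s \<noteq> d" using Suc.prems(2) by blast
    thus "(\<alpha> ^^ i) (\<alpha> s) \<noteq> d" by (simp add: funpow_swap1)
  qed
  moreover have "(\<alpha> ^^ k) (\<alpha> s) = u" using Suc.prems(3) by (simp add: funpow_swap1)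
  ultimately have "\<alpha> s \<in> lay \<alpha> k {u}" using Suc.IH as by blast
  thus ?case using Suc.prems(1) by (simp add: lay_def pre_def)
qed

lemma lay_fin: "finite (lay \<alpha> k {u})"
proof (cases k)
  case 0 thus ?thesis by (simp add: lay_def)
next
  case (Suc k')
  have "lay \<alpha> k {u} \<subseteq> Dom" unfolding Suc lay_def by (auto simp: pre_def)
  thus ?thesis using finDom finite_subset by blast
qed

lemma load_bound:
  assumes a: "\<alpha> \<in> set_pmf MP" and nc: "\<not> (\<exists>w\<in>W - {d}. chain \<alpha> (K - 1) w)" and u: "u \<in> Dom"
  shows "load (V \<union> W) d \<alpha> u = enat (card {s \<in> (V \<union> W) - {d}. flow_visits \<alpha> d s u})"
    "real (card {s \<in> (V \<union> W) - {d}. flow_visits \<alpha> d s u}) \<le> 1 + (\<Sum>i<2*K-2. real (card (lay \<alpha> (Suc i) {u})))"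
proof -
  have ud: "u \<noteq> d" using u by (simp add: Dom_def)
  have nocyc: "\<not> (\<exists>k>0. (\<alpha> ^^ k) u = u)"
  proof
    assume "\<exists>k>0. (\<alpha> ^^ k) u = u"
    then obtain k where k: "k > 0" "(\<alpha> ^^ k) u = u" by auto
    have per: "(\<alpha> ^^ (k * m)) u = u" for m
    proof (induction m)
      case (Suc m)
      have "(\<alpha> ^^ (k * Suc m)) u = (\<alpha> ^^ k) ((\<alpha> ^^ (k * m)) u)" by (simp add: funpow_add)
      thus ?case using Suc k by simp
    qed simp
    have nd: "\<forall>i. (\<alpha> ^^ i) u \<noteq> d"
    proof (intro allI notI)
      fix i assume i: "(\<alpha> ^^ i) u = d"
      have "i \<le> k * i" using k(1) by (cases k) auto
      hence "k * i = (k * i - i) + i" by simp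
      hence "(\<alpha> ^^ (k * i)) u = (\<alpha> ^^ (k * i - i)) ((\<alpha> ^^ i) u)" by (metis funpow_add comp_apply)
      also have "\<dots> = d" using i funpow_d[OF a] by simp
      finally show False using per[of i] ud by simp
    qed
    have "2 * K \<le> k * (2 * K)" using k(1) by (cases k) auto
    hence "2 * K - 1 \<le> k * (2 * K)" by (meson diff_le_self le_trans)
    thus False using chain_from_path[OF a u] nd nc by blast
  qed
  show "load (V \<union> W) d \<alpha> u = enat (card {s \<in> (V \<union> W) - {d}. flow_visits \<alpha> d s u})"
    using nocyc by (simp add: load_def)
  have Kp: "K \<ge> 1" using Kpos by simp
  have subs: "{s \<in> (V \<union> W) - {d}. flow_visits \<alpha> d s u} \<subseteq> (\<Union>k<2*K-1. lay \<alpha> k {u})"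
  proof
    fix s assume "s \<in> {s \<in> (V \<union> W) - {d}. flow_visits \<alpha> d s u}"
    hence sD: "s \<in> Dom" and fv: "flow_visits \<alpha> d s u" by (auto simp: Dom_def)
    obtain k where k: "(\<alpha> ^^ k) s = u" "\<forall>j<k. (\<alpha> ^^ j) s \<noteq> d" using fv by (auto simp: flow_visits_def)
    have nd: "\<forall>i\<le>k. (\<alpha> ^^ i) s \<noteq> d" using k ud by (metis le_neq_implies_less)
    have "k < 2 * K - 1"
    proof (rule ccontr)
      assume "\<not> k < 2 * K - 1"
      hence "2 * K - 1 \<le> k" by simp
      thus False using chain_from_path[OF a sD nd] nc by blast
    qed
    moreover have "s \<in> lay \<alpha> k {u}" using lay_mem[OF a u sD k(2) k(1)] .
    ultimately show "s \<in> (\<Union>k<2*K-1. lay \<alpha> k {u})" by blast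
  qed
  have "card {s \<in> (V \<union> W) - {d}. flow_visits \<alpha> d s u} \<le> card (\<Union>k<2*K-1. lay \<alpha> k {u})"
    using subs lay_fin by (intro card_mono) auto
  also have "\<dots> \<le> (\<Sum>k<2*K-1. card (lay \<alpha> k {u}))" by (rule card_UN_le) simp
  finally have c1: "real (card {s \<in> (V \<union> W) - {d}. flow_visits \<alpha> d s u}) \<le> (\<Sum>k<2*K-1. real (card (lay \<alpha> k {u})))"
    by (simp flip: of_nat_sum)
  have e: "2 * K - 1 = Suc (2 * K - 2)" using Kp by simp
  have "(\<Sum>k<2*K-1. real (card (lay \<alpha> k {u}))) = real (card (lay \<alpha> 0 {u})) + (\<Sum>i<2*K-2. real (card (lay \<alpha> (Suc i) {u})))"
    unfolding e by (rule sum.lessThan_Suc_shift)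
  also have "real (card (lay \<alpha> 0 {u})) = 1" by (simp add: lay_def)
  finally show "real (card {s \<in> (V \<union> W) - {d}. flow_visits \<alpha> d s u}) \<le> 1 + (\<Sum>i<2*K-2. real (card (lay \<alpha> (Suc i) {u})))"
    using c1 by simp
qed

end


context PB begin

lemma final_bound:
  fixes Lr :: real
  shows "measure_pmf.prob MP {\<alpha>. \<forall>u \<in> (V \<union> W) - {d}. \<exists>m. load (V \<union> W) d \<alpha> u = enat m \<and> real m \<le> Lr}
     \<ge> 1 - (real (card (W - {d})) / 2^(K-1) + real (card Dom) * exp (1/80 - th * (Lr - 1)))"
proof -
  define Good where "Good = {\<alpha>. \<forall>u \<in> (V \<union> W) - {d}. \<exists>m. load (V \<union> W) d \<alpha> u = enat m \<and> real m \<le> Lr}"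
  define E0 where "E0 = (\<Union>w\<in>W - {d}. {\<alpha>. chain \<alpha> (K - 1) w})"
  define Eu where "Eu u = {\<alpha>. th * (Lr - 1) \<le> th * (\<Sum>i<2*K-2. real (card (lay \<alpha> (Suc i) {u})))}" for u
  have thp: "th > 0" by (simp add: th_def)
  have finWd: "finite (W - {d})" using finW by simp
  have cover: "(UNIV - Good) \<inter> set_pmf MP \<subseteq> E0 \<union> (\<Union>u\<in>Dom. Eu u)"
  proof
    fix \<alpha> assume a: "\<alpha> \<in> (UNIV - Good) \<inter> set_pmf MP"
    show "\<alpha> \<in> E0 \<union> (\<Union>u\<in>Dom. Eu u)"
    proof (rule ccontr)
      assume na: "\<alpha> \<notin> E0 \<union> (\<Union>u\<in>Dom. Eu u)"
      have s: "\<alpha> \<in> set_pmf MP" using a by simp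
      have nc: "\<not> (\<exists>w\<in>W - {d}. chain \<alpha> (K - 1) w)" using na by (auto simp: E0_def)
      have "\<alpha> \<in> Good"
        unfolding Good_def
      proof (intro CollectI ballI)
        fix u assume uD': "u \<in> (V \<union> W) - {d}"
        hence uD: "u \<in> Dom" by (simp add: Dom_def)
        have "\<alpha> \<notin> Eu u" using na uD by auto
        hence lt: "th * (\<Sum>i<2*K-2. real (card (lay \<alpha> (Suc i) {u}))) < th * (Lr - 1)" by (simp add: Eu_def)
        hence "(\<Sum>i<2*K-2. real (card (lay \<alpha> (Suc i) {u}))) < Lr - 1" using thp by simp
        hence "real (card {s \<in> (V \<union> W) - {d}. flow_visits \<alpha> d s u}) \<le> Lr"
          using load_bound(2)[OF s nc uD] by linarith
        thus "\<exists>m. load (V \<union> W) d \<alpha> u = enat m \<and> real m \<le> Lr" using load_bound(1)[OF s nc uD] by blast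
      qed
      thus False using a by simp
    qed
  qed
  have P0: "measure_pmf.prob MP E0 \<le> real (card (W - {d})) / 2^(K-1)"
  proof -
    have "measure_pmf.prob MP E0 \<le> (\<Sum>w\<in>W - {d}. measure_pmf.prob MP {\<alpha>. chain \<alpha> (K - 1) w})"
      unfolding E0_def using finWd by (intro measure_pmf.finite_measure_subadditive_finite) auto
    also have "\<dots> \<le> (\<Sum>w\<in>W - {d}. 1 / 2^(K-1))"
    proof (rule sum_mono)
      fix w assume w: "w \<in> W - {d}"
      have "measure_pmf.prob MP (Pi Dom (\<lambda>_. UNIV) \<inter> {\<alpha>. chain \<alpha> (K - 1) w}) \<le> measure_pmf.prob MP (Pi Dom (\<lambda>_. UNIV)) / 2^(K-1)"
        using w by (intro chain_bound) auto
      thus "measure_pmf.prob MP {\<alpha>. chain \<alpha> (K - 1) w} \<le> 1 / 2^(K-1)" by (simp add: prob_UNIV_pmf)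
    qed
    also have "\<dots> = real (card (W - {d})) / 2^(K-1)" by simp
    finally show ?thesis .
  qed
  have Pu: "measure_pmf.prob MP (Eu u) \<le> exp (1/80 - th * (Lr - 1))" if u: "u \<in> Dom" for u
  proof -
    have cr: "0 \<le> cls u" "cls u < MM" using cls_range[of u] u by (auto simp: Dom_def)
    have "measure_pmf.prob MP (Pi Dom (\<lambda>_. UNIV) \<inter> {\<alpha>. th * (Lr - 1) \<le> th * (\<Sum>i<2*K-2. real (card (lay \<alpha> (Suc i) {u})))})
       \<le> measure_pmf.prob MP (Pi Dom (\<lambda>_. UNIV)) * exp (beta (cls u) * real (card {u}) - th * (Lr - 1))"
      using cr u Kpos by (intro layer_bound) auto
    hence "measure_pmf.prob MP (Eu u) \<le> exp (beta (cls u) - th * (Lr - 1))"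
      by (simp add: prob_UNIV_pmf Eu_def)
    also have "\<dots> \<le> exp (1/80 - th * (Lr - 1))" by (simp add: beta_def)
    finally show ?thesis .
  qed
  have "measure_pmf.prob MP (UNIV - Good) = measure_pmf.prob MP ((UNIV - Good) \<inter> set_pmf MP)"
    by (rule measure_Int_set_pmf[symmetric])
  also have "\<dots> \<le> measure_pmf.prob MP (E0 \<union> (\<Union>u\<in>Dom. Eu u))"
    using cover by (intro measure_pmf.finite_measure_mono) auto
  also have "\<dots> \<le> measure_pmf.prob MP E0 + measure_pmf.prob MP (\<Union>u\<in>Dom. Eu u)"
    by (rule measure_Un_le) auto
  also have "measure_pmf.prob MP (\<Union>u\<in>Dom. Eu u) \<le> (\<Sum>u\<in>Dom. measure_pmf.prob MP (Eu u))"
    using finDom by (intro measure_pmf.finite_measure_subadditive_finite) auto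
  also have "\<dots> \<le> (\<Sum>u\<in>Dom. exp (1/80 - th * (Lr - 1)))" using Pu by (intro sum_mono) auto
  also have "\<dots> = real (card Dom) * exp (1/80 - th * (Lr - 1))" by simp
  finally have bad: "measure_pmf.prob MP (UNIV - Good) \<le> real (card (W - {d})) / 2^(K-1) + real (card Dom) * exp (1/80 - th * (Lr - 1))"
    using P0 by linarith
  have "measure_pmf.prob MP (space (measure_pmf MP) - Good) = 1 - measure_pmf.prob MP Good"
    by (rule measure_pmf.prob_compl) simp
  hence "measure_pmf.prob MP Good = 1 - measure_pmf.prob MP (UNIV - Good)" by simp
  thus ?thesis using bad unfolding Good_def by linarith
qed

end


lemma aux_t1: "exp (ln (2::real)) = 2" by simp
lemma aux_t2: "(n::nat) > 0 \<Longrightarrow> real n powr C = exp (C * ln (real n))" by (simp add: powr_def)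
lemma aux_t3: "exp (- (z::real)) = 1 / exp z" by (simp add: exp_minus inverse_eq_divide)


lemma ln2_ge: "ln (2::real) \<ge> 1/2"
proof -
  have h: "exp (1/2::real) \<le> 1 + 1/2 + (1/2)^2" by (rule exp_bound) auto
  have "(1/2::real)^2 = 1/4" by (simp add: power2_eq_square)
  hence "exp (1/2::real) \<le> 2" using h by simp
  thus ?thesis by (subst ln_ge_iff) auto
qed

lemma numeric_final:
  fixes C :: real and n K :: nat and Lr a b :: real
  assumes C: "C > 4" and n: "n \<ge> 4" and K: "real K = C * log 2 (real n)"
    and Lr: "Lr = 1000 * (C + 1) * log 2 (real n) * log 2 (log 2 (real n))"
    and a: "a \<le> real n" and b: "b \<le> 2 * real n" and a0: "0 \<le> a" and b0: "0 \<le> b"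
  shows "1 - 3 * real n powr (-(C - 1)) \<le> 1 - (a / 2^(K-1) + b * exp (1/80 - 1/1000 * (Lr - 1)))"
proof -
  have np: "real n > 0" using n by simp
  have l4: "log 2 (real n) \<ge> 2"
  proof -
    have "log 2 (4::real) \<le> log 2 (real n)" using n by (subst log_le_cancel_iff) auto
    moreover have "log 2 (4::real) = 2"
    proof -
      have h1: "log 2 ((2::real) powr 2) = 2" by (rule log_powr_cancel) auto
      have h2: "(2::real) powr 2 = 4" by (simp add: powr_numeral)
      show ?thesis using h1 unfolding h2 .
    qed
    ultimately show ?thesis by simp
  qed
  have Kp: "K > 0"
  proof -
    have "real K > 0" using K C l4 by (simp add: mult_pos_pos)
    thus ?thesis by simp
  qed
  define nC where "nC = real n powr C"
  have nCp: "nC > 0" using np by (simp add: nC_def)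
  have twoK: "(2::real) ^ K = nC"
  proof -
    have "(2::real) ^ K = 2 powr (real K)" by (simp add: powr_realpow)
    also have "\<dots> = 2 powr (log 2 (real n) * C)" using K by (simp add: mult.commute)
    also have "\<dots> = (2 powr log 2 (real n)) powr C" by (simp add: powr_powr)
    also have "\<dots> = nC" using np by (simp add: nC_def)
    finally show ?thesis .
  qed
  have twoK1: "(2::real) ^ (K - 1) = nC / 2"
  proof -
    have "(2::real) ^ K = 2 ^ (K - 1) * 2" using Kp by (metis Suc_diff_1 power_Suc2)
    thus ?thesis using twoK by simp
  qed
  have rhs: "real n powr (-(C - 1)) = real n / nC"
  proof -
    have "real n powr (-(C - 1)) = real n powr (1 - C)" by simp
    also have "\<dots> = real n powr 1 / real n powr C" by (rule powr_diff)
    finally show ?thesis using np by (simp add: nC_def)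
  qed
  have t1: "a / 2^(K-1) \<le> 2 * real n / nC"
  proof -
    have "a / 2^(K-1) = 2 * a / nC" unfolding twoK1 by simp
    also have "\<dots> \<le> 2 * real n / nC" using a nCp by (intro divide_right_mono) auto
    finally show ?thesis .
  qed
  have lnn: "ln (real n) \<ge> 2 * ln 2"
  proof -
    have "ln (4::real) \<le> ln (real n)" using n by simp
    moreover have "ln (4::real) = 2 * ln 2"
    proof -
      have h1: "ln ((2::real)^2) = real 2 * ln 2" by (rule ln_realpow)
      have h2: "(2::real)^2 = 4" by simp
      show ?thesis using h1 unfolding h2 by simp
    qed
    ultimately show ?thesis by simp
  qed
  have lnn0: "ln (real n) \<ge> 0" using n by simp
  have log_ge_ln: "log 2 (real n) \<ge> ln (real n)"
  proof -
    have l2: "0 < ln (2::real)" "ln (2::real) < 1" using ln_2_less_1 by auto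
    have "ln (real n) * ln 2 \<le> ln (real n) * 1" using l2 lnn0 by (intro mult_left_mono) auto
    hence "ln (real n) / ln 2 \<ge> ln (real n)" using l2
      by (simp add: le_divide_eq)
    thus ?thesis by (simp add: log_def)
  qed
  have ll: "log 2 (log 2 (real n)) \<ge> 1"
  proof -
    have "log 2 (2::real) \<le> log 2 (log 2 (real n))" using l4 by (subst log_le_cancel_iff) auto
    thus ?thesis by simp
  qed
  have Lrb: "Lr \<ge> 1000 * (C + 1) * ln (real n)"
  proof -
    have c0: "1000 * (C + 1) \<ge> 0" using C by simp
    have "1000 * (C + 1) * log 2 (real n) * log 2 (log 2 (real n)) \<ge> 1000 * (C + 1) * log 2 (real n) * 1"
      using ll c0 l4 by (intro mult_left_mono) auto
    moreover have "1000 * (C + 1) * log 2 (real n) \<ge> 1000 * (C + 1) * ln (real n)"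
      using log_ge_ln c0 by (intro mult_left_mono) auto
    ultimately show ?thesis using Lr by simp
  qed
  have arg: "1/80 - 1/1000 * (Lr - 1) \<le> - (C * ln (real n) + ln 2)"
  proof -
    have "1/1000 * (Lr - 1) \<ge> 1/1000 * (1000 * (C + 1) * ln (real n) - 1)" using Lrb by simp
    hence "1/1000 * (Lr - 1) \<ge> (C + 1) * ln (real n) - 1/1000" by (simp add: algebra_simps)
    moreover have "ln (real n) \<ge> ln 2 + 1/80 + 1/1000" using lnn ln2_ge by simp
    ultimately show ?thesis by (simp add: algebra_simps)
  qed
  have "exp (1/80 - 1/1000 * (Lr - 1)) \<le> exp (- (C * ln (real n) + ln 2))" using arg by simp
  also have "\<dots> = 1 / exp (C * ln (real n) + ln 2)" by (rule aux_t3)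
  also have "exp (C * ln (real n) + ln 2) = exp (C * ln (real n)) * exp (ln 2)" by (rule exp_add)
  also have "exp (ln (2::real)) = 2" by (rule aux_t1)
  also have "exp (C * ln (real n)) = nC" unfolding nC_def using np by (intro aux_t2[symmetric]) simp
  finally have "exp (1/80 - 1/1000 * (Lr - 1)) \<le> 1 / (nC * 2)" .
  hence "exp (1/80 - 1/1000 * (Lr - 1)) \<le> 1 / (2 * nC)" by (simp only: mult.commute)
  hence e: "exp (1/80 - 1/1000 * (Lr - 1)) \<le> 1 / (2 * nC)" .
  have t2: "b * exp (1/80 - 1/1000 * (Lr - 1)) \<le> real n / nC"
  proof -
    have "b * exp (1/80 - 1/1000 * (Lr - 1)) \<le> 2 * real n * (1 / (2 * nC))"
      using b b0 e by (intro mult_mono) auto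
    also have "2 * real n * (1 / (2 * nC)) = real n / nC" by simp
    finally show ?thesis .
  qed
  have "2 * real n / nC = 2 * (real n / nC)" by simp
  hence "a / 2^(K-1) + b * exp (1/80 - 1/1000 * (Lr - 1)) \<le> 3 * (real n / nC)"
    using t1 t2 by linarith
  thus ?thesis unfolding rhs by simp
qed

theorem mainTheorem2:
  fixes C :: real
  assumes "C > 4"
  shows "\<exists>c::real. \<exists>N::nat. \<forall>n\<ge>N. \<forall>(V::nat set) (W::nat set) (lvl::nat \<Rightarrow> nat) (K::nat) (I::nat)
           (d::nat) (F::(nat \<times> nat) set).
      finite V \<and> finite W \<and> V \<inter> W = {} \<and> card V = n \<and> card W = n
      \<and> real K = C * log 2 (real n) \<and> K dvd n \<and> I = n div K
      \<and> (\<forall>u \<in> V \<union> W. lvl u < K)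
      \<and> (\<forall>i<K. card {v \<in> V. lvl v = i} = I \<and> card {w \<in> W. lvl w = i} = I)
      \<and> d \<in> W
      \<and> F \<subseteq> (V \<times> W) \<union> (W \<times> V) \<and> sym F
      \<and> (\<forall>i<K. (\<forall>w \<in> W. real (card {v \<in> V. lvl v = i \<and> w \<in> failed_nbrs F v}) \<le> real I / 3)
              \<and> (\<forall>v \<in> V. real (card {w \<in> W. lvl w = i \<and> v \<in> failed_nbrs F w}) \<le> real I / 3))
      \<longrightarrow> measure_pmf.prob (PB_routing V W lvl K F d)
            {\<alpha>. \<forall>u \<in> (V \<union> W) - {d}. \<exists>m. load (V \<union> W) d \<alpha> u = enat m
                   \<and> real m \<le> c * log 2 (real n) * log 2 (log 2 (real n))}
          \<ge> 1 - 3 * real n powr (-(C - 1))"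
proof -
  define c where "c = 1000 * (C + 1)"
  show ?thesis
  proof (intro exI[of _ c] exI[of _ "4::nat"] allI impI, goal_cases)
    case (1 n V W lvl K I d F)
    have n: "4 \<le> n" using 1 by simp
    note H = 1(2)
    have finV: "finite V" and finW: "finite W" and disj: "V \<inter> W = {}" and cV: "card V = n" and cW: "card W = n"
      using H by blast+
    have Kr: "real K = C * log 2 (real n)" and Kd: "K dvd n" and Id: "I = n div K"
      using H by blast+
    have lvl_lt: "\<forall>u \<in> V \<union> W. lvl u < K" using H by blast
    have cardL: "\<forall>i<K. card {v \<in> V. lvl v = i} = I \<and> card {w \<in> W. lvl w = i} = I" using H by blast
    have dW: "d \<in> W" and symF: "sym F" using H by blast+
    have cF: "\<forall>i<K. (\<forall>w \<in> W. real (card {v \<in> V. lvl v = i \<and> w \<in> failed_nbrs F v}) \<le> real I / 3)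
              \<and> (\<forall>v \<in> V. real (card {w \<in> W. lvl w = i \<and> v \<in> failed_nbrs F w}) \<le> real I / 3)"
      using H by blast
    have Kp: "K > 0"
    proof -
      have "log 2 (real n) > 0" using n by simp
      hence "real K > 0" using Kr assms by simp
      thus ?thesis by simp
    qed
    have Ip: "I > 0"
    proof -
      have "n = K * I" using Kd Id by simp
      thus ?thesis using n by (cases I) auto
    qed
    have PBi: "PB V W lvl K I d F"
      unfolding PB_def by (intro conjI; fact)
    interpret PB V W lvl K I d F by (rule PBi)
    define Lr where "Lr = c * log 2 (real n) * log 2 (log 2 (real n))"
    have fb: "measure_pmf.prob MP {\<alpha>. \<forall>u \<in> (V \<union> W) - {d}. \<exists>m. load (V \<union> W) d \<alpha> u = enat m \<and> real m \<le> Lr}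
     \<ge> 1 - (real (card (W - {d})) / 2^(K-1) + real (card Dom) * exp (1/80 - 1/1000 * (Lr - 1)))"
      using final_bound[of Lr] by (simp add: th_def)
    have ca: "real (card (W - {d})) \<le> real n"
    proof -
      have "card (W - {d}) \<le> card W" using finW by (simp add: card_mono)
      thus ?thesis using cW by simp
    qed
    have cb: "real (card Dom) \<le> 2 * real n"
    proof -
      have "card Dom \<le> card (V \<union> W)" using finV finW by (simp add: Dom_def card_mono)
      also have "\<dots> \<le> card V + card W" by (rule card_Un_le)
      finally show ?thesis using cV cW by simp
    qed
    have num: "1 - 3 * real n powr (-(C - 1)) \<le> 1 - (real (card (W - {d})) / 2^(K-1) + real (card Dom) * exp (1/80 - 1/1000 * (Lr - 1)))"
      by (rule numeric_final[OF assms n Kr _ ca cb]) (simp_all add: Lr_def c_def)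
    show ?case using fb num unfolding MP_def Lr_def by linarith
  qed
qed



end
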